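(* For every $m\ge1$, $\dim\mathcal{H}_{(m)}\ge\frac{(m-1)!}{m}$, and $\dim\mathcal{H}_{(m)}\sim\frac{(m-1)!}{m}$ as $m\to\infty$.
   Context: $\mathcal{H}_{(m)}$ is the quotient of the span in $\mathbb{C}[\mathbb{S}_m]$ of all $m$-cycles by the span of those generalized Vassiliev elements all of whose terms are $m$-cycles, where for $m\ge2$, $\gamma\in\mathbb{S}_{m-1}$, $q\in[m-1]\cup\{*\}$, $t\in\{0,\dots,m-1\}$, $\alpha_t\in\mathbb{S}_m$ is obtained by inserting a new point $x$ into the line $1<\dots<m-1$ in the gap between $t$ and $t+1$, relabeling in order, acting as $\gamma$ on old points except $q\mapsto x\mapsto\gamma(q)$ if $q\ne*$, $x$ fixed if $q=*$, and for a cycle $v$ of $\gamma$, $E(\gamma,q,v)=\sum_{j\in v}(\alpha_{j-1}-\alpha_j)$. *)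

theory Defs
  imports Complex_Main "HOL-Combinatorics.Permutations" "HOL-Library.Landau_Symbols" "HOL-Library.Function_Algebras"
begin

(* Elements of the group algebra C[S_m] are represented as complex-valued functions
   on permutations (maps nat => nat); S_m = permutations of {1..m}. *)
type_synonym galg = "(nat \<Rightarrow> nat) \<Rightarrow> complex"

definition fscale :: "complex \<Rightarrow> galg \<Rightarrow> galg" where
  "fscale c f = (\<lambda>x. c * f x)"

interpretation gvs: vector_space fscale
  by unfold_locales (auto simp: fscale_def algebra_simps)

definition basis_el :: "(nat \<Rightarrow> nat) \<Rightarrow> galg" where
  "basis_el p = (\<lambda>q. if q = p then 1 else 0)"

definition is_mcycle :: "nat \<Rightarrow> (nat \<Rightarrow> nat) \<Rightarrow> bool" where
  "is_mcycle m p \<longleftrightarrow> p permutes {1..m} \<and> (\<forall>i\<in>{1..m}. {(p ^^ k) i | k. True} = {1..m})"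

definition cycles_of :: "nat \<Rightarrow> (nat \<Rightarrow> nat) \<Rightarrow> nat set set" where
  "cycles_of n g = {{(g ^^ k) a | k. True} | a. a \<in> {1..n}}"

(* relabelling when inserting a new point in the gap between t and t+1 *)
definition ins_lbl :: "nat \<Rightarrow> nat \<Rightarrow> nat" where
  "ins_lbl t i = (if i \<le> t then i else i + 1)"

definition del_lbl :: "nat \<Rightarrow> nat \<Rightarrow> nat" where
  "del_lbl t y = (if y \<le> t then y else y - 1)"

(* alpha_t in S_m from gamma in S_{m-1} and q in [m-1] \<union> {*} (None = * ).
   The new point x gets label t+1. *)
definition alpha :: "nat \<Rightarrow> (nat \<Rightarrow> nat) \<Rightarrow> nat option \<Rightarrow> nat \<Rightarrow> nat \<Rightarrow> nat" where
  "alpha m g q t y =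
     (if y = t + 1 then (case q of None \<Rightarrow> t + 1 | Some r \<Rightarrow> ins_lbl t (g r))
      else if y \<in> {1..m} then
        (if q = Some (del_lbl t y) then t + 1 else ins_lbl t (g (del_lbl t y)))
      else y)"

definition vass :: "nat \<Rightarrow> (nat \<Rightarrow> nat) \<Rightarrow> nat option \<Rightarrow> nat set \<Rightarrow> galg" where
  "vass m g q v = (\<lambda>p. \<Sum>j\<in>v. basis_el (alpha m g q (j - 1)) p - basis_el (alpha m g q j) p)"

definition supp :: "galg \<Rightarrow> (nat \<Rightarrow> nat) set" where
  "supp f = {p. f p \<noteq> 0}"

definition mcycles_span :: "nat \<Rightarrow> galg set" where
  "mcycles_span m = gvs.span {basis_el p | p. is_mcycle m p}"

definition vass_span :: "nat \<Rightarrow> galg set" where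
  "vass_span m = gvs.span {vass m g q v | g q v.
      2 \<le> m \<and> g permutes {1..m-1} \<and> (q = None \<or> (\<exists>r\<in>{1..m-1}. q = Some r))
      \<and> v \<in> cycles_of (m-1) g \<and> supp (vass m g q v) \<subseteq> {p. is_mcycle m p}}"

(* dim H_(m): dimension of the quotient  mcycles_span m / vass_span m
   (vass_span m is a subspace of mcycles_span m) *)
definition dimH :: "nat \<Rightarrow> nat" where
  "dimH m = gvs.dim (mcycles_span m) - gvs.dim (vass_span m)"

end

theory Submission
  imports Defs "HOL-Real_Asymp.Real_Asymp"
begin


definition rot :: "nat \<Rightarrow> nat \<Rightarrow> nat \<Rightarrow> nat" where
  "rot m n i = (if 1 \<le> i \<and> i \<le> m then (i - 1 + n) mod m + 1 else i)"

definition cjg :: "nat \<Rightarrow> nat \<Rightarrow> (nat \<Rightarrow> nat) \<Rightarrow> (nat \<Rightarrow> nat)" where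
  "cjg m n s = rot m n \<circ> s \<circ> rot m ((m - 1) * n)"

lemma rot_Suc: "j < m \<Longrightarrow> rot m n (Suc j) = Suc ((j + n) mod m)"
  by (simp add: rot_def)

lemma rot_in: "1 \<le> m \<Longrightarrow> i \<in> {1..m} \<Longrightarrow> rot m n i \<in> {1..m}"
proof -
  assume m: "1 \<le> m" and i: "i \<in> {1..m}"
  then obtain j where j: "i = Suc j" "j < m" by (cases i) auto
  have "(j + n) mod m < m" using m by simp
  thus ?thesis using j by (simp add: rot_Suc Suc_leI)
qed

lemma rot_add: "1 \<le> m \<Longrightarrow> rot m a \<circ> rot m b = rot m (a + b)"
proof
  fix i assume m: "1 \<le> m"
  show "(rot m a \<circ> rot m b) i = rot m (a + b) i"
  proof (cases "1 \<le> i \<and> i \<le> m")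
    case True
    then obtain j where j: "i = Suc j" "j < m" by (cases i) auto
    have l: "(j + b) mod m < m" using m by simp
    have "((j + b) mod m + a) mod m = (j + b + a) mod m"
      by (simp add: mod_add_left_eq)
    thus ?thesis using j l by (simp add: rot_Suc add_ac)
  qed (auto simp: rot_def)
qed

lemma rot_mod: "1 \<le> m \<Longrightarrow> rot m n = rot m (n mod m)"
proof
  fix i assume m: "1 \<le> m"
  show "rot m n i = rot m (n mod m) i"
  proof (cases "1 \<le> i \<and> i \<le> m")
    case True
    then obtain j where j: "i = Suc j" "j < m" by (cases i) auto
    thus ?thesis by (simp add: rot_Suc mod_add_right_eq)
  qed (auto simp: rot_def)
qed

lemma rot_0: "1 \<le> m \<Longrightarrow> rot m 0 = id"
proof
  fix i assume m: "1 \<le> m"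
  show "rot m 0 i = id i"
  proof (cases "1 \<le> i \<and> i \<le> m")
    case True
    then obtain j where j: "i = Suc j" "j < m" by (cases i) auto
    thus ?thesis by (simp add: rot_Suc)
  qed (auto simp: rot_def)
qed

lemma rot_multiple: "1 \<le> m \<Longrightarrow> rot m (m * k) = id"
  using rot_mod[of m "m*k"] rot_0 by simp

lemma rot_inv1: "1 \<le> m \<Longrightarrow> rot m ((m - 1) * n) \<circ> rot m n = id"
proof -
  assume m: "1 \<le> m"
  have "(m - 1) * n + n = m * n" using m by (cases m) auto
  thus ?thesis using rot_add[OF m, of "(m - 1) * n" n] rot_multiple[OF m, of n] by simp
qed

lemma rot_inv2: "1 \<le> m \<Longrightarrow> rot m n \<circ> rot m ((m - 1) * n) = id"
proof -
  assume m: "1 \<le> m"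
  have "n + (m - 1) * n = m * n" using m by (cases m) auto
  thus ?thesis using rot_add[OF m, of n "(m - 1) * n"] rot_multiple[OF m, of n] by simp
qed

lemma rot_permutes: "1 \<le> m \<Longrightarrow> rot m n permutes {1..m}"
proof (rule bij_imp_permutes)
  assume m: "1 \<le> m"
  show "bij_betw (rot m n) {1..m} {1..m}"
  proof (rule bij_betw_byWitness[where f' = "rot m ((m - 1) * n)"])
    show "\<forall>a\<in>{1..m}. rot m ((m - 1) * n) (rot m n a) = a"
      using rot_inv1[OF m, of n] by (auto simp: fun_eq_iff)
    show "\<forall>a\<in>{1..m}. rot m n (rot m ((m - 1) * n) a) = a"
      using rot_inv2[OF m, of n] by (auto simp: fun_eq_iff)
    show "rot m n ` {1..m} \<subseteq> {1..m}" using rot_in[OF m] by auto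
    show "rot m ((m - 1) * n) ` {1..m} \<subseteq> {1..m}" using rot_in[OF m] by auto
  qed
  show "\<And>x. x \<notin> {1..m} \<Longrightarrow> rot m n x = x" by (auto simp: rot_def)
qed

lemma cjg_add: "1 \<le> m \<Longrightarrow> cjg m a (cjg m b s) = cjg m (a + b) s"
proof -
  assume m: "1 \<le> m"
  have "rot m ((m - 1) * b) \<circ> rot m ((m - 1) * a) = rot m ((m - 1) * (a + b))"
    using rot_add[OF m] by (simp add: distrib_left add.commute)
  moreover have "rot m a \<circ> rot m b = rot m (a + b)" using rot_add[OF m] .
  ultimately show ?thesis unfolding cjg_def
    by (metis comp_assoc)
qed

lemma cjg_mod: "1 \<le> m \<Longrightarrow> cjg m n s = cjg m (n mod m) s"
proof -
  assume m: "1 \<le> m"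
  have "rot m ((m - 1) * n) = rot m ((m - 1) * (n mod m))"
    using rot_mod[OF m, of "(m-1)*n"] rot_mod[OF m, of "(m-1)*(n mod m)"]
    by (simp add: mod_mult_right_eq)
  thus ?thesis unfolding cjg_def using rot_mod[OF m, of n] by simp
qed

lemma cjg_0: "1 \<le> m \<Longrightarrow> cjg m 0 s = s"
  unfolding cjg_def using rot_0 by simp

lemma cjg_m: "1 \<le> m \<Longrightarrow> cjg m m s = s"
  using cjg_mod[of m m s] cjg_0 by simp

lemma orbit_closed: "f ` S \<subseteq> S \<Longrightarrow> a \<in> S \<Longrightarrow> (f ^^ k) a \<in> S"
  by (induction k) auto

lemma cjg_pow: "1 \<le> m \<Longrightarrow> (cjg m n s) ^^ k = rot m n \<circ> s ^^ k \<circ> rot m ((m - 1) * n)"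
proof (induction k)
  case 0 thus ?case using rot_inv2[of m n] by simp
next
  case (Suc k)
  have "cjg m n s ^^ Suc k = cjg m n s \<circ> (cjg m n s ^^ k)" by simp
  also have "\<dots> = rot m n \<circ> s \<circ> (rot m ((m - 1) * n) \<circ> rot m n) \<circ> s ^^ k \<circ> rot m ((m - 1) * n)"
    by (simp only: Suc.IH[OF Suc.prems]) (simp only: cjg_def comp_assoc)
  also have "\<dots> = rot m n \<circ> (s \<circ> s ^^ k) \<circ> rot m ((m - 1) * n)"
    by (simp only: rot_inv1[OF Suc.prems] comp_id comp_assoc)
  also have "\<dots> = rot m n \<circ> s ^^ Suc k \<circ> rot m ((m - 1) * n)" by simp
  finally show ?case .
qed

lemma cjg_mcycle: "1 \<le> m \<Longrightarrow> is_mcycle m s \<Longrightarrow> is_mcycle m (cjg m n s)"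
proof -
  assume m: "1 \<le> m" and s: "is_mcycle m s"
  have p: "cjg m n s permutes {1..m}" unfolding cjg_def
    using s rot_permutes[OF m] by (auto simp: is_mcycle_def intro!: permutes_compose)
  have "{(cjg m n s ^^ k) i |k. True} = {1..m}" if i: "i \<in> {1..m}" for i
  proof -
    let ?j = "rot m ((m - 1) * n) i"
    have j: "?j \<in> {1..m}" using rot_in[OF m i] .
    have "{(cjg m n s ^^ k) i |k. True} = rot m n ` {(s ^^ k) ?j |k. True}"
      using cjg_pow[OF m] by auto
    also have "\<dots> = rot m n ` {1..m}" using s j by (simp add: is_mcycle_def)
    also have "\<dots> = {1..m}" using permutes_image[OF rot_permutes[OF m]] .
    finally show ?thesis .
  qed
  thus ?thesis using p by (simp add: is_mcycle_def)
qed


lemma orb_step: "x \<in> {(f ^^ k) a |k. True} \<Longrightarrow> f x \<in> {(f ^^ k) a |k. True}"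
proof -
  assume "x \<in> {(f ^^ k) a |k. True}"
  then obtain k where "x = (f ^^ k) a" by auto
  hence "f x = (f ^^ Suc k) a" by simp
  thus ?thesis by blast
qed

lemma orb_self: "a \<in> {(f ^^ k) a |k. True}"
proof -
  have "a = (f ^^ 0) a" by simp
  thus ?thesis by blast
qed

lemma orb_sub: "(\<And>x. x \<in> S \<Longrightarrow> f x \<in> S) \<Longrightarrow> a \<in> S \<Longrightarrow> {(f ^^ k) a |k. True} \<subseteq> S"
  using orbit_closed[of f S a] by blast

lemma mcycle_perm: "is_mcycle m p \<Longrightarrow> p permutes {1..m}"
  by (simp add: is_mcycle_def)

lemma mcycle_orb: "is_mcycle m p \<Longrightarrow> i \<in> {1..m} \<Longrightarrow> {(p ^^ k) i |k. True} = {1..m}"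
  by (simp add: is_mcycle_def)

lemma X_1: "{p. is_mcycle 1 p} = {id}"
proof -
  have "p = id" if "is_mcycle 1 p" for p
  proof
    fix x
    have pp: "p permutes {1}" using that by (simp add: is_mcycle_def)
    show "p x = id x"
    proof (cases "x = 1")
      case True
      then show ?thesis using permutes_in_image[OF pp, of x] by simp
    qed (use pp in \<open>auto simp: permutes_not_in\<close>)
  qed
  moreover have "is_mcycle 1 id"
    unfolding is_mcycle_def by (auto simp: permutes_id)
  ultimately show ?thesis by auto
qed

lemma ins_fwd:
  assumes n: "1 \<le> n" and g: "is_mcycle n g" and r: "r \<in> {1..n}"
  shows "is_mcycle (Suc n) (g \<circ> transpose r (Suc n))"
proof -
  let ?a = "g \<circ> transpose r (Suc n)"
  have gp: "g permutes {1..n}" using g by (simp add: is_mcycle_def)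
  have gp': "g permutes {1..Suc n}" using permutes_subset[OF gp] by auto
  have ap: "?a permutes {1..Suc n}"
    by (rule permutes_compose[OF permutes_swap_id gp']) (use r in auto)
  have gin: "g x \<in> {1..n}" if "x \<in> {1..n}" for x using permutes_in_image[OF gp] that by simp
  have gSuc: "g (Suc n) = Suc n" using permutes_not_in[OF gp] by simp
  have "{(?a ^^ k) y |k. True} = {1..Suc n}" if y: "y \<in> {1..Suc n}" for y
  proof
    show "{(?a ^^ k) y |k. True} \<subseteq> {1..Suc n}"
      by (rule orb_sub) (use y permutes_in_image[OF ap] in auto)
    let ?P = "{(?a ^^ k) y |k. True}"
    define a where "a = (if y \<le> n then y else g r)"
    have aP: "a \<in> ?P"
    proof (cases "y \<le> n")
      case True thus ?thesis using orb_self unfolding a_def by simp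
    next
      case False
      hence "y = Suc n" using y by auto
      hence "?a y = g r" by simp
      thus ?thesis using orb_step[OF orb_self, of ?a y] False unfolding a_def by simp
    qed
    have a1: "a \<in> {1..n}" using y r gin unfolding a_def by auto
    have stepP: "g z \<in> ?P" if "z \<in> ?P \<inter> {1..n}" for z
    proof (cases "z = r")
      case True
      have "?a z = Suc n" using True gSuc by simp
      hence "Suc n \<in> ?P" using orb_step[of z ?a y] that by auto
      moreover have "?a (Suc n) = g r" by simp
      ultimately show ?thesis using orb_step[of "Suc n" ?a y] True by auto
    next
      case False
      hence "?a z = g z" using that by (auto simp: transpose_def)
      thus ?thesis using orb_step[of z ?a y] that by auto
    qed
    have "{(g ^^ k) a |k. True} \<subseteq> ?P \<inter> {1..n}"
      by (rule orb_sub) (use stepP gin aP a1 in auto)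
    hence sub: "{1..n} \<subseteq> ?P" using mcycle_orb[OF g a1] by auto
    have "?a r = Suc n" using gSuc by simp
    moreover have "r \<in> ?P" using sub r by auto
    ultimately have "Suc n \<in> ?P" using orb_step[of r ?a y] by auto
    show "{1..Suc n} \<subseteq> ?P"
    proof
      fix x assume "x \<in> {1..Suc n}"
      hence "x \<in> {1..n} \<or> x = Suc n" by auto
      thus "x \<in> ?P" using sub \<open>Suc n \<in> ?P\<close> by blast
    qed
  qed
  thus ?thesis using ap by (simp add: is_mcycle_def)
qed

lemma ins_bwd:
  assumes n: "1 \<le> n" and s: "is_mcycle (Suc n) s"
  shows "\<exists>g r. is_mcycle n g \<and> r \<in> {1..n} \<and> s = g \<circ> transpose r (Suc n)"
proof -
  have sp: "s permutes {1..Suc n}" using s by (simp add: is_mcycle_def)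
  define r where "r = inv s (Suc n)"
  have sr: "s r = Suc n" unfolding r_def using permutes_inverses(1)[OF sp] by simp
  have r1: "r \<in> {1..Suc n}" unfolding r_def
    using permutes_in_image[OF permutes_inv[OF sp]] by simp
  have "r \<noteq> Suc n"
  proof
    assume "r = Suc n"
    hence fx: "s (Suc n) = Suc n" using sr by simp
    have "{(s ^^ k) (Suc n) |k. True} \<subseteq> {Suc n}"
      by (rule orb_sub) (use fx in auto)
    moreover have "{(s ^^ k) (Suc n) |k. True} = {1..Suc n}" using mcycle_orb[OF s] by simp
    ultimately show False using n by auto
  qed
  hence r: "r \<in> {1..n}" using r1 by auto
  define g where "g = s \<circ> transpose r (Suc n)"
  have gSuc: "g (Suc n) = Suc n" unfolding g_def using sr by simp
  have gp': "g permutes {1..Suc n}" unfolding g_def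
    by (rule permutes_compose[OF permutes_swap_id sp]) (use r in auto)
  have gp: "g permutes {1..n}"
    by (rule permutes_superset[OF gp']) (use gSuc in \<open>auto simp: le_Suc_eq\<close>)
  have sg: "s = g \<circ> transpose r (Suc n)" unfolding g_def by (simp add: comp_assoc)
  have gin: "g x \<in> {1..n}" if "x \<in> {1..n}" for x using permutes_in_image[OF gp] that by simp
  have "{(g ^^ k) a |k. True} = {1..n}" if a: "a \<in> {1..n}" for a
  proof
    let ?O = "{(g ^^ k) a |k. True}"
    show Osub: "?O \<subseteq> {1..n}" by (rule orb_sub) (use gin a in auto)
    define S where "S = ?O \<union> (if r \<in> ?O then {Suc n} else {})"
    have "s x \<in> S" if "x \<in> S" for x
    proof (cases "x \<in> ?O")
      case True
      show ?thesis
      proof (cases "x = r")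
        case True thus ?thesis using sr \<open>x \<in> ?O\<close> unfolding S_def by auto
      next
        case False
        have "x \<noteq> Suc n" using Osub True by auto
        hence "s x = g x" using sg False by (simp add: transpose_def)
        thus ?thesis using orb_step[OF True] unfolding S_def by auto
      qed
    next
      case False
      hence "x = Suc n" "r \<in> ?O" using that unfolding S_def by (auto split: if_splits)
      hence "s x = g r" using sg by simp
      thus ?thesis using orb_step[OF \<open>r \<in> ?O\<close>] unfolding S_def by auto
    qed
    hence "{(s ^^ k) a |k. True} \<subseteq> S" by (rule orb_sub) (use orb_self S_def in auto)
    hence "{1..Suc n} \<subseteq> S" using mcycle_orb[OF s, of a] a by auto
    show "{1..n} \<subseteq> ?O"
    proof
      fix x assume x: "x \<in> {1..n}"
      hence "x \<in> S" using \<open>{1..Suc n} \<subseteq> S\<close> by auto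
      moreover have "x \<noteq> Suc n" using x by auto
      ultimately show "x \<in> ?O" unfolding S_def by (auto split: if_splits)
    qed
  qed
  hence "is_mcycle n g" using gp by (simp add: is_mcycle_def)
  thus ?thesis using r sg by blast
qed

lemma ins_inj: "inj_on (\<lambda>(g, r). g \<circ> transpose r (Suc n)) ({g. g permutes {1..n}} \<times> {1..n})"
proof (rule inj_onI, clarify)
  fix g r g' r'
  assume g: "g permutes {1..n}" and g': "g' permutes {1..n}" and r: "r \<in> {1..n}" and r': "r' \<in> {1..n}"
    and eq: "g \<circ> transpose r (Suc n) = g' \<circ> transpose r' (Suc n)"
  have "r = r'"
  proof (rule ccontr)
    assume ne: "r \<noteq> r'"
    have "(g \<circ> transpose r (Suc n)) r = Suc n" using permutes_not_in[OF g] by simp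
    moreover have "(g' \<circ> transpose r' (Suc n)) r = g' r" using ne r by (simp add: transpose_def)
    moreover have "g' r \<in> {1..n}" using permutes_in_image[OF g'] r by simp
    ultimately show False using eq by auto
  qed
  moreover have "g = g'"
  proof -
    have "g = g \<circ> transpose r (Suc n) \<circ> transpose r (Suc n)" by (simp add: comp_assoc)
    also have "\<dots> = g'" using eq \<open>r = r'\<close> by (simp add: comp_assoc)
    finally show ?thesis .
  qed
  ultimately show "g = g' \<and> r = r'" by simp
qed

lemma card_X: "1 \<le> m \<Longrightarrow> card {p. is_mcycle m p} = fact (m - 1)"
proof (induction m rule: nat_induct_at_least)
  case base thus ?case by (subst X_1) simp
next
  case (Suc n)
  let ?F = "\<lambda>(g, r). g \<circ> transpose r (Suc n)"
  have eq: "{p. is_mcycle (Suc n) p} = ?F ` ({p. is_mcycle n p} \<times> {1..n})"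
  proof
    show "{p. is_mcycle (Suc n) p} \<subseteq> ?F ` ({p. is_mcycle n p} \<times> {1..n})"
      using ins_bwd[OF Suc.hyps] by fastforce
    show "?F ` ({p. is_mcycle n p} \<times> {1..n}) \<subseteq> {p. is_mcycle (Suc n) p}"
      using ins_fwd[OF Suc.hyps] by auto
  qed
  have inj: "inj_on ?F ({p. is_mcycle n p} \<times> {1..n})"
    by (rule inj_on_subset[OF ins_inj]) (auto simp: is_mcycle_def)
  have "card {p. is_mcycle (Suc n) p} = card {p. is_mcycle n p} * n"
    unfolding eq card_image[OF inj] card_cartesian_product by simp
  thus ?case using Suc.IH Suc.hyps by (cases n) (auto simp: algebra_simps)
qed


definition Dset :: "nat \<Rightarrow> galg set" where
  "Dset m = {basis_el (cjg m 1 s) - basis_el s | s. is_mcycle m s}"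

definition VSet :: "nat \<Rightarrow> galg set" where
  "VSet m = {vass m g q v | g q v.
      2 \<le> m \<and> g permutes {1..m-1} \<and> (q = None \<or> (\<exists>r\<in>{1..m-1}. q = Some r))
      \<and> v \<in> cycles_of (m-1) g \<and> supp (vass m g q v) \<subseteq> {p. is_mcycle m p}}"

lemma telescope: "(\<Sum>j::nat\<in>{1..n::nat}. (f (j - 1) - f j :: 'a :: ab_group_add)) = f 0 - f n"
proof (induction n)
  case (Suc n)
  have "{1..Suc n} = insert (Suc n) {1..n}" by auto
  thus ?case using Suc by simp
qed simp

lemma vass_full: "vass m g q {1..m-1} = basis_el (alpha m g q 0) - basis_el (alpha m g q (m-1))"
  unfolding vass_def fun_eq_iff
  using telescope[of "\<lambda>j. basis_el (alpha m g q j) _" "m-1"] by simp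

lemma rot1: "i \<in> {1..m} \<Longrightarrow> rot m 1 i = (if i = m then 1 else i + 1)"
  by (auto simp: rot_def)

lemma rotm1: "2 \<le> m \<Longrightarrow> i \<in> {1..m} \<Longrightarrow> rot m (m - 1) i = (if i = 1 then m else i - 1)"
proof -
  assume m: "2 \<le> m" and i: "i \<in> {1..m}"
  show ?thesis
  proof (cases "i = 1")
    case True thus ?thesis using m by (simp add: rot_def)
  next
    case False
    hence "i - 1 + (m - 1) = (i - 2) + m" using i m by auto
    hence "(i - 1 + (m - 1)) mod m = (i - 2 + m) mod m" by (rule arg_cong)
    also have "\<dots> = i - 2"
    proof -
      have "i - 2 < m" using i by auto
      thus ?thesis by simp
    qed
    finally have "(i - 1 + (m - 1)) mod m = i - 2" .
    thus ?thesis using i False by (auto simp: rot_def)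
  qed
qed

lemma alpha_top:
  assumes m: "2 \<le> m" and g: "g permutes {1..m-1}" and r: "r \<in> {1..m-1}"
  shows "alpha m g (Some r) (m-1) = g \<circ> transpose r m"
proof
  fix y
  have gin: "g x \<in> {1..m-1}" if "x \<in> {1..m-1}" for x using permutes_in_image[OF g] that by simp
  have gout: "g x = x" if "x \<notin> {1..m-1}" for x using permutes_not_in[OF g] that by simp
  show "alpha m g (Some r) (m - 1) y = (g \<circ> transpose r m) y"
  proof (cases "y = m")
    case True
    thus ?thesis using m gin[OF r] r by (auto simp: alpha_def ins_lbl_def)
  next
    case False
    show ?thesis
    proof (cases "y \<in> {1..m}")
      case True
      hence y: "y \<in> {1..m-1}" using False by auto
      thus ?thesis using m gin[OF y] False gout[of m]
        by (auto simp: alpha_def ins_lbl_def del_lbl_def transpose_def)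
    next
      case F2: False
      thus ?thesis using m False gout[of y] r by (auto simp: alpha_def transpose_def)
    qed
  qed
qed

lemma alpha_0:
  assumes m: "2 \<le> m" and g: "g permutes {1..m-1}" and q: "q = None \<or> (\<exists>r\<in>{1..m-1}. q = Some r)"
  shows "alpha m g q 0 = cjg m 1 (alpha m g q (m-1))"
proof
  fix y
  have gin: "g x \<in> {1..m-1}" if "x \<in> {1..m-1}" for x using permutes_in_image[OF g] that by simp
  have gout: "g x = x" if "x \<notin> {1..m-1}" for x using permutes_not_in[OF g] that by simp
  have m1: "(m - 1) * 1 = m - 1" by simp
  show "alpha m g q 0 y = cjg m 1 (alpha m g q (m - 1)) y"
  proof (cases "y \<in> {1..m}")
    case False
    hence "rot m (m-1) y = y" "rot m 1 y = y" by (auto simp: rot_def)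
    moreover have "alpha m g q (m-1) y = y" "alpha m g q 0 y = y" using False m by (auto simp: alpha_def)
    ultimately show ?thesis by (simp add: cjg_def)
  next
    case True
    show ?thesis
    proof (cases "y = 1")
      case True
      have ry: "rot m (m-1) y = m" using rotm1[OF m, of y] True m by simp
      have mm: "m = m - 1 + 1" using m by simp
      show ?thesis
      proof (cases q)
        case None
        have "alpha m g q (m-1) m = m" using None mm by (simp add: alpha_def)
        moreover have "alpha m g q 0 y = 1" using None True by (simp add: alpha_def)
        moreover have "rot m 1 m = 1" using rot1[of m m] m by simp
        ultimately show ?thesis using ry by (simp add: cjg_def)
      next
        case (Some r)
        hence r: "r \<in> {1..m-1}" using q by auto
        have gr: "g r \<in> {1..m-1}" using gin[OF r] .
        have "alpha m g q (m-1) m = g r" using Some mm gr by (simp add: alpha_def ins_lbl_def)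
        moreover have "alpha m g q 0 y = g r + 1" using Some True gr by (simp add: alpha_def ins_lbl_def)
        moreover have "rot m 1 (g r) = g r + 1" using rot1[of "g r" m] gr by auto
        ultimately show ?thesis using ry by (simp add: cjg_def)
      qed
    next
      case False
      hence ry: "rot m (m-1) y = y - 1" using rotm1[OF m \<open>y \<in> {1..m}\<close>] by simp
      have y1: "y - 1 \<in> {1..m-1}" using False \<open>y \<in> {1..m}\<close> by auto
      have "alpha m g q (m-1) (y - 1) = (if q = Some (y - 1) then m else g (y - 1))"
        using y1 m gin[OF y1] by (auto simp: alpha_def ins_lbl_def del_lbl_def)
      moreover have "alpha m g q 0 y = (if q = Some (y - 1) then 1 else g (y - 1) + 1)"
        using False \<open>y \<in> {1..m}\<close> gin[OF y1] by (auto simp: alpha_def ins_lbl_def del_lbl_def)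
      moreover have "rot m 1 m = 1" using rot1[of m m] m by simp
      moreover have "rot m 1 (g (y - 1)) = g (y - 1) + 1" using rot1[of "g (y - 1)" m] gin[OF y1] by auto
      ultimately show ?thesis using ry by (auto simp: cjg_def)
    qed
  qed
qed


lemma alpha_mc_full:
  assumes m: "2 \<le> m" and g: "g permutes {1..m-1}" and t: "t \<le> m - 1"
    and mc: "is_mcycle m (alpha m g q t)" and a: "a \<in> {1..m-1}"
  shows "{(g ^^ k) a |k. True} = {1..m-1}"
proof
  let ?A = "alpha m g q t"
  let ?O = "{(g ^^ k) a |k. True}"
  have gin: "g x \<in> {1..m-1}" if "x \<in> {1..m-1}" for x using permutes_in_image[OF g] that by simp
  show Osub: "?O \<subseteq> {1..m-1}" by (rule orb_sub) (use gin a in auto)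
  define S where "S = ins_lbl t ` ?O \<union> (if \<exists>r\<in>?O. q = Some r then {t+1} else {})"
  have insne: "ins_lbl t y \<noteq> t + 1" for y by (auto simp: ins_lbl_def)
  have insdel: "del_lbl t (ins_lbl t y) = y" for y by (auto simp: ins_lbl_def del_lbl_def)
  have "?A x \<in> S" if xS: "x \<in> S" for x
  proof (cases "x \<in> ins_lbl t ` ?O")
    case True
    then obtain y where y: "y \<in> ?O" "x = ins_lbl t y" by auto
    have yr: "y \<in> {1..m-1}" using Osub y by auto
    hence xin: "x \<in> {1..m}" using y t by (auto simp: ins_lbl_def)
    have "?A x = (if q = Some y then t + 1 else ins_lbl t (g y))"
      using y xin insne insdel by (simp add: alpha_def)
    thus ?thesis using orb_step[OF y(1)] y(1) unfolding S_def by auto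
  next
    case False
    then obtain r where r: "r \<in> ?O" "q = Some r" "x = t + 1" using xS False unfolding S_def by (auto split: if_splits)
    hence "?A x = ins_lbl t (g r)" by (simp add: alpha_def)
    thus ?thesis using orb_step[OF r(1)] unfolding S_def by auto
  qed
  moreover have "ins_lbl t a \<in> S" unfolding S_def using orb_self[of a g] by blast
  ultimately have "{(?A ^^ k) (ins_lbl t a) |k. True} \<subseteq> S"
    by (rule orb_sub)
  moreover have "ins_lbl t a \<in> {1..m}" using a t by (auto simp: ins_lbl_def)
  ultimately have sub: "{1..m} \<subseteq> S" using mcycle_orb[OF mc] by auto
  show "{1..m-1} \<subseteq> ?O"
  proof
    fix b assume b: "b \<in> {1..m-1}"
    hence "ins_lbl t b \<in> {1..m}" using t by (auto simp: ins_lbl_def)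
    hence "ins_lbl t b \<in> S" using sub by auto
    hence "ins_lbl t b \<in> ins_lbl t ` ?O" using insne unfolding S_def by (auto split: if_splits)
    then obtain y where "y \<in> ?O" "ins_lbl t b = ins_lbl t y" by auto
    moreover hence "b = y" using insdel by metis
    ultimately show "b \<in> ?O" by simp
  qed
qed

lemma VS_sub: "x \<in> VSet m \<Longrightarrow> x \<in> gvs.span (Dset m)"
proof -
  assume "x \<in> VSet m"
  then obtain g q v where m: "2 \<le> m" and g: "g permutes {1..m-1}"
    and q: "q = None \<or> (\<exists>r\<in>{1..m-1}. q = Some r)" and v: "v \<in> cycles_of (m-1) g"
    and sp: "supp (vass m g q v) \<subseteq> {p. is_mcycle m p}" and x: "x = vass m g q v"
    unfolding VSet_def by blast
  obtain a where a: "a \<in> {1..m-1}" "v = {(g ^^ k) a |k. True}" using v unfolding cycles_of_def by blast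
  have gin: "g x \<in> {1..m-1}" if "x \<in> {1..m-1}" for x using permutes_in_image[OF g] that by simp
  have vsub: "v \<subseteq> {1..m-1}" unfolding a(2) by (rule orb_sub) (use gin a in auto)
  show ?thesis
  proof (cases "\<exists>t\<le>m-1. is_mcycle m (alpha m g q t)")
    case True
    then obtain t where "t \<le> m-1" "is_mcycle m (alpha m g q t)" by blast
    hence vfull: "v = {1..m-1}" using alpha_mc_full[OF m g _ _ a(1)] a(2) by blast
    let ?B = "alpha m g q (m-1)"
    have xe: "x = basis_el (cjg m 1 ?B) - basis_el ?B"
      using x vfull vass_full alpha_0[OF m g q] by simp
    show ?thesis
    proof (cases "cjg m 1 ?B = ?B")
      case True
      hence "x = 0" using xe by simp
      thus ?thesis by (simp add: gvs.span_zero)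
    next
      case False
      hence "x ?B \<noteq> 0" using xe by (simp add: basis_el_def)
      hence "is_mcycle m ?B" using sp x by (auto simp: supp_def)
      hence "x \<in> Dset m" using xe unfolding Dset_def by blast
      thus ?thesis by (rule gvs.span_base)
    qed
  next
    case False
    have "x p = 0" for p
    proof (cases "is_mcycle m p")
      case True
      have "basis_el (alpha m g q t) p = 0" if "t \<le> m - 1" for t
        using False True that by (auto simp: basis_el_def)
      moreover have "j - 1 \<le> m - 1 \<and> j \<le> m - 1" if "j \<in> v" for j
      proof -
        have "j \<le> m - 1" using vsub that by auto
        thus ?thesis by simp
      qed
      ultimately show ?thesis unfolding x vass_def by simp
    next
      case False
      thus ?thesis using sp x by (auto simp: supp_def)
    qed
    hence "x = 0" by auto
    thus ?thesis by (simp add: gvs.span_zero)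
  qed
qed

lemma D_sub: "1 \<le> m \<Longrightarrow> Dset m \<subseteq> gvs.span (VSet m)"
proof
  fix d assume m: "1 \<le> m" and "d \<in> Dset m"
  then obtain s where s: "is_mcycle m s" and d: "d = basis_el (cjg m 1 s) - basis_el s"
    unfolding Dset_def by blast
  show "d \<in> gvs.span (VSet m)"
  proof (cases "m = 1")
    case True
    hence "rot m 1 = id" "rot m ((m - 1) * 1) = id" using rot_0[of 1] rot_multiple[of 1 1] by auto
    hence "cjg m 1 s = s" by (simp add: cjg_def)
    hence "d = 0" using d by simp
    thus ?thesis by (simp add: gvs.span_zero)
  next
    case False
    hence m2: "2 \<le> m" using m by auto
    have n1: "1 \<le> m - 1" using m2 by auto
    have sm: "is_mcycle (Suc (m-1)) s" using s m by simp
    obtain g r where g: "is_mcycle (m-1) g" and r: "r \<in> {1..m-1}" and sg: "s = g \<circ> transpose r (Suc (m-1))"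
      using ins_bwd[OF n1 sm] by blast
    have gp: "g permutes {1..m-1}" using g by (simp add: is_mcycle_def)
    have sg': "s = alpha m g (Some r) (m-1)" using sg alpha_top[OF m2 gp r] m by simp
    have q: "Some r = None \<or> (\<exists>r'\<in>{1..m-1}. Some r = Some r')" using r by auto
    have vd: "vass m g (Some r) {1..m-1} = d"
      using vass_full alpha_0[OF m2 gp q] sg' d by simp
    have cyc: "{1..m-1} \<in> cycles_of (m-1) g"
      unfolding cycles_of_def using mcycle_orb[OF g, of 1] n1 by fastforce
    have "supp d \<subseteq> {cjg m 1 s, s}" unfolding d supp_def by (auto simp: basis_el_def)
    also have "\<dots> \<subseteq> {p. is_mcycle m p}" using cjg_mcycle[OF m s] s by auto
    finally have "d \<in> VSet m" unfolding VSet_def using m2 gp q cyc vd by fastforce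
    thus ?thesis by (rule gvs.span_base)
  qed
qed


definition orb :: "nat \<Rightarrow> (nat \<Rightarrow> nat) \<Rightarrow> (nat \<Rightarrow> nat) set" where
  "orb m s = (\<lambda>k. cjg m k s) ` {..<m}"

definition rep :: "nat \<Rightarrow> (nat \<Rightarrow> nat) \<Rightarrow> (nat \<Rightarrow> nat)" where
  "rep m s = (SOME x. x \<in> orb m s)"

definition Rset :: "nat \<Rightarrow> (nat \<Rightarrow> nat) set" where
  "Rset m = rep m ` {p. is_mcycle m p}"

lemma cjg_in_orb: "1 \<le> m \<Longrightarrow> cjg m n s \<in> orb m s"
  unfolding orb_def using cjg_mod[of m n s] by auto

lemma orb_self': "1 \<le> m \<Longrightarrow> s \<in> orb m s"
  using cjg_in_orb[of m 0 s] cjg_0 by simp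

lemma orb_cnj: "1 \<le> m \<Longrightarrow> orb m (cjg m n s) = orb m s"
proof
  assume m: "1 \<le> m"
  show "orb m (cjg m n s) \<subseteq> orb m s"
    unfolding orb_def[of m "cjg m n s"] using cjg_add[OF m] cjg_in_orb[OF m] by auto
  show "orb m s \<subseteq> orb m (cjg m n s)"
  proof
    fix t assume "t \<in> orb m s"
    then obtain k where t: "t = cjg m k s" unfolding orb_def by auto
    have e: "k + (m - 1) * n + n = k + m * n" using m by (cases m) auto
    have "cjg m (k + (m - 1) * n) (cjg m n s) = cjg m (k + m * n) s"
      by (simp only: cjg_add[OF m] e)
    also have "\<dots> = cjg m k s" using cjg_mod[OF m, of "k + m * n" s] cjg_mod[OF m, of k s] by simp
    finally show "t \<in> orb m (cjg m n s)" using t cjg_in_orb[OF m] by metis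
  qed
qed

lemma orb_eq: "1 \<le> m \<Longrightarrow> t \<in> orb m s \<Longrightarrow> orb m t = orb m s"
proof -
  assume m: "1 \<le> m" and "t \<in> orb m s"
  then obtain k where "t = cjg m k s" unfolding orb_def by auto
  thus ?thesis using orb_cnj[OF m] by simp
qed

lemma orb_X: "1 \<le> m \<Longrightarrow> is_mcycle m s \<Longrightarrow> orb m s \<subseteq> {p. is_mcycle m p}"
  unfolding orb_def using cjg_mcycle by auto

lemma rep_in: "1 \<le> m \<Longrightarrow> rep m s \<in> orb m s"
  unfolding rep_def using orb_self' by (metis someI)

lemma rep_eq: "1 \<le> m \<Longrightarrow> t \<in> orb m s \<Longrightarrow> rep m t = rep m s"
  unfolding rep_def using orb_eq by metis

lemma rep_R: "1 \<le> m \<Longrightarrow> r \<in> Rset m \<Longrightarrow> rep m r = r"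
  unfolding Rset_def using rep_eq rep_in by force

lemma finite_X: "finite {p. is_mcycle m p}"
  by (rule finite_subset[OF _ finite_permutations[of "{1..m}"]]) (auto simp: is_mcycle_def)

lemma R_X: "1 \<le> m \<Longrightarrow> Rset m \<subseteq> {p. is_mcycle m p}"
  unfolding Rset_def using rep_in orb_X by blast

lemma sum_app: "finite A \<Longrightarrow> (\<Sum>x\<in>A. (F x :: galg)) p = (\<Sum>x\<in>A. F x p)"
  by (induction A rule: finite_induct) auto

lemma indep_basis: "finite A \<Longrightarrow> gvs.independent (basis_el ` A)"
proof (rule gvs.independent_if_scalars_zero)
  assume A: "finite A"
  show "finite (basis_el ` A)" using A by simp
  fix f x assume s: "(\<Sum>x\<in>basis_el ` A. fscale (f x) x) = 0" and x: "x \<in> basis_el ` A"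
  then obtain p where p: "p \<in> A" "x = basis_el p" by auto
  have "0 = (\<Sum>y\<in>basis_el ` A. fscale (f y) y) p" using s by simp
  also have "\<dots> = (\<Sum>y\<in>basis_el ` A. f y * y p)" using A by (simp add: sum_app fscale_def)
  also have "\<dots> = (\<Sum>y\<in>{x}. f y * y p)"
  proof (rule sum.mono_neutral_right)
    show "\<forall>i\<in>basis_el ` A - {x}. f i * i p = 0"
    proof
      fix i assume "i \<in> basis_el ` A - {x}"
      then obtain q where "i = basis_el q" "q \<noteq> p" using p by auto
      thus "f i * i p = 0" by (simp add: basis_el_def)
    qed
  qed (use A x in auto)
  also have "\<dots> = f x" using p by (simp add: basis_el_def)
  finally show "f x = 0" by simp
qed

lemma inj_basis: "inj basis_el"
  by (rule injI) (metis basis_el_def one_neq_zero)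

lemma dim_M: "gvs.dim (mcycles_span m) = card {p. is_mcycle m p}"
proof -
  have "{basis_el p |p. is_mcycle m p} = basis_el ` {p. is_mcycle m p}" by auto
  hence "gvs.dim (mcycles_span m) = gvs.dim (basis_el ` {p. is_mcycle m p})"
    unfolding mcycles_span_def by simp
  also have "\<dots> = card (basis_el ` {p. is_mcycle m p})"
    by (rule gvs.dim_eq_card_independent[OF indep_basis[OF finite_X]])
  also have "\<dots> = card {p. is_mcycle m p}" by (rule card_image[OF inj_on_subset[OF inj_basis]]) simp
  finally show ?thesis .
qed

lemma dim_V: "1 \<le> m \<Longrightarrow> gvs.dim (vass_span m) = gvs.dim (Dset m)"
proof -
  assume m: "1 \<le> m"
  have "vass_span m = gvs.span (VSet m)" unfolding vass_span_def VSet_def by simp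
  moreover have "gvs.span (VSet m) = gvs.span (Dset m)"
    using gvs.span_eq VS_sub D_sub[OF m] by blast
  ultimately show ?thesis by simp
qed


lemma rep_cnj: "1 \<le> m \<Longrightarrow> rep m (cjg m n s) = rep m s"
  using rep_eq cjg_in_orb by blast

lemma dimD_le: assumes m: "1 \<le> m"
  shows "gvs.dim (Dset m) + card (Rset m) \<le> card {p. is_mcycle m p}"
proof -
  let ?X = "{p. is_mcycle m p}"
  let ?E = "(\<lambda>s. basis_el s - basis_el (rep m s)) ` (?X - Rset m)"
  have t: "basis_el s - basis_el (rep m s) \<in> gvs.span ?E" if "s \<in> ?X" for s
  proof (cases "s \<in> Rset m")
    case True thus ?thesis using rep_R[OF m] by (simp add: gvs.span_zero)
  next
    case False thus ?thesis using that by (intro gvs.span_base) auto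
  qed
  have "Dset m \<subseteq> gvs.span ?E"
  proof
    fix d assume "d \<in> Dset m"
    then obtain s where s: "is_mcycle m s" and d: "d = basis_el (cjg m 1 s) - basis_el s"
      unfolding Dset_def by blast
    have "d = (basis_el (cjg m 1 s) - basis_el (rep m (cjg m 1 s))) - (basis_el s - basis_el (rep m s))"
      using d rep_cnj[OF m] by simp
    thus "d \<in> gvs.span ?E" using t s cjg_mcycle[OF m s] by (simp add: gvs.span_diff)
  qed
  hence "gvs.dim (Dset m) \<le> card ?E" by (rule gvs.dim_le_card) (simp add: finite_X)
  also have "\<dots> \<le> card (?X - Rset m)" by (rule card_image_le) (simp add: finite_X)
  also have "\<dots> = card ?X - card (Rset m)" by (rule card_Diff_subset) (use R_X[OF m] finite_X finite_subset in auto)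
  finally show ?thesis using card_mono[OF finite_X R_X[OF m]] by simp
qed

lemma diff_in_span: assumes m: "1 \<le> m" and s: "is_mcycle m s"
  shows "basis_el (cjg m k s) - basis_el s \<in> gvs.span (Dset m)"
proof (induction k)
  case 0 thus ?case using cjg_0[OF m] gvs.span_zero by (simp add: zero_fun_def[symmetric])
next
  case (Suc k)
  have "cjg m (Suc k) s = cjg m 1 (cjg m k s)" using cjg_add[OF m, of 1 k s] by simp
  moreover have "basis_el (cjg m 1 (cjg m k s)) - basis_el (cjg m k s) \<in> Dset m"
    unfolding Dset_def using cjg_mcycle[OF m s] by blast
  ultimately have "basis_el (cjg m (Suc k) s) - basis_el (cjg m k s) \<in> gvs.span (Dset m)"
    using gvs.span_base by simp
  from gvs.span_add[OF this Suc]
  have "(basis_el (cjg m (Suc k) s) - basis_el (cjg m k s)) + (basis_el (cjg m k s) - basis_el s)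
        \<in> gvs.span (Dset m)" .
  moreover have "(basis_el (cjg m (Suc k) s) - basis_el (cjg m k s)) + (basis_el (cjg m k s) - basis_el s)
        = basis_el (cjg m (Suc k) s) - basis_el s" by (simp add: algebra_simps)
  ultimately show ?case by metis
qed

lemma dimD_ge: assumes m: "1 \<le> m"
  shows "card {p. is_mcycle m p} \<le> gvs.dim (Dset m) + card (Rset m)"
proof -
  let ?X = "{p. is_mcycle m p}"
  have finD: "finite (Dset m)"
  proof -
    have "Dset m = (\<lambda>s. basis_el (cjg m 1 s) - basis_el s) ` ?X" unfolding Dset_def by auto
    thus ?thesis using finite_X by simp
  qed
  obtain B where B: "B \<subseteq> Dset m" "gvs.independent B" "Dset m \<subseteq> gvs.span B" "card B = gvs.dim (Dset m)"
    using gvs.basis_exists by blast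
  have finB: "finite B" using B(1) finD finite_subset by blast
  have "basis_el ` ?X \<subseteq> gvs.span (B \<union> basis_el ` Rset m)"
  proof
    fix x assume "x \<in> basis_el ` ?X"
    then obtain s where s: "is_mcycle m s" "x = basis_el s" by auto
    obtain k where k: "rep m s = cjg m k s" using rep_in[OF m, of s] unfolding orb_def by auto
    have "basis_el (rep m s) - basis_el s \<in> gvs.span (Dset m)" using diff_in_span[OF m s(1)] k by simp
    also have "\<dots> \<subseteq> gvs.span B" using B(3) gvs.span_mono gvs.span_span by blast
    also have "\<dots> \<subseteq> gvs.span (B \<union> basis_el ` Rset m)" by (rule gvs.span_mono) auto
    finally have a: "basis_el (rep m s) - basis_el s \<in> gvs.span (B \<union> basis_el ` Rset m)" .
    have "rep m s \<in> Rset m" unfolding Rset_def using s by auto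
    hence b: "basis_el (rep m s) \<in> gvs.span (B \<union> basis_el ` Rset m)" by (intro gvs.span_base) auto
    have "x = basis_el (rep m s) - (basis_el (rep m s) - basis_el s)" using s by simp
    thus "x \<in> gvs.span (B \<union> basis_el ` Rset m)" using gvs.span_diff[OF b a] by simp
  qed
  hence "gvs.dim (basis_el ` ?X) \<le> card (B \<union> basis_el ` Rset m)"
    by (rule gvs.dim_le_card) (use finB finite_subset[OF R_X[OF m] finite_X] in simp)
  also have "\<dots> \<le> card B + card (basis_el ` Rset m)" by (rule card_Un_le)
  also have "\<dots> \<le> card B + card (Rset m)" using card_image_le[OF finite_subset[OF R_X[OF m] finite_X]] by simp
  finally have "gvs.dim (basis_el ` ?X) \<le> gvs.dim (Dset m) + card (Rset m)" using B(4) by simp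
  moreover have "gvs.dim (basis_el ` ?X) = card ?X"
    using gvs.dim_eq_card_independent[OF indep_basis[OF finite_X]]
      card_image[OF inj_on_subset[OF inj_basis]] by simp
  ultimately show ?thesis by simp
qed

lemma dimH_R: "1 \<le> m \<Longrightarrow> dimH m = card (Rset m)"
  unfolding dimH_def using dim_M dim_V dimD_le dimD_ge by (metis add_diff_cancel_left' le_antisym add.commute)


lemma card_orb: "card (orb m s) \<le> m"
  unfolding orb_def using card_image_le[of "{..<m}" "\<lambda>k. cjg m k s"] by simp

lemma X_sub_UN: "1 \<le> m \<Longrightarrow> {p. is_mcycle m p} \<subseteq> (\<Union>r\<in>Rset m. orb m r)"
proof
  fix s assume m: "1 \<le> m" and s: "s \<in> {p. is_mcycle m p}"
  have "orb m (rep m s) = orb m s" using orb_eq[OF m rep_in[OF m]] .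
  hence "s \<in> orb m (rep m s)" using orb_self'[OF m] by simp
  thus "s \<in> (\<Union>r\<in>Rset m. orb m r)" using s unfolding Rset_def by blast
qed

lemma R_lower: assumes m: "1 \<le> m" shows "card {p. is_mcycle m p} \<le> m * card (Rset m)"
proof -
  have fR: "finite (Rset m)" using finite_subset[OF R_X[OF m] finite_X] .
  have "card {p. is_mcycle m p} \<le> card (\<Union>r\<in>Rset m. orb m r)"
    by (rule card_mono[OF _ X_sub_UN[OF m]]) (use fR in \<open>auto simp: orb_def\<close>)
  also have "\<dots> \<le> (\<Sum>r\<in>Rset m. card (orb m r))" by (rule card_UN_le[OF fR])
  also have "\<dots> \<le> (\<Sum>r\<in>Rset m. m)" by (rule sum_mono) (rule card_orb)
  finally show ?thesis by (simp add: mult.commute)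
qed

lemma rep_orb: "orb m a = orb m b \<Longrightarrow> rep m a = rep m b"
  unfolding rep_def by simp

lemma R_disj: assumes m: "1 \<le> m" and a: "a \<in> Rset m" and b: "b \<in> Rset m" and ne: "a \<noteq> b"
  shows "orb m a \<inter> orb m b = {}"
proof (rule ccontr)
  assume "orb m a \<inter> orb m b \<noteq> {}"
  then obtain x where "x \<in> orb m a" "x \<in> orb m b" by auto
  hence "orb m a = orb m b" using orb_eq[OF m] by metis
  hence "rep m a = rep m b" by (rule rep_orb)
  thus False using rep_R[OF m a] rep_R[OF m b] ne by simp
qed

lemma fix_inj:
  assumes m: "1 \<le> m" and k1: "1 \<le> k" and s: "is_mcycle m s" and s': "is_mcycle m s'"
    and fs: "cjg m k s = s" and fs': "cjg m k s' = s'" and agree: "\<forall>i\<in>{1..k}. s i = s' i"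
  shows "s = s'"
proof -
  have comm: "f \<circ> rot m k = rot m k \<circ> f" if "cjg m k f = f" for f
  proof -
    have "f \<circ> rot m k = rot m k \<circ> f \<circ> (rot m ((m - 1) * k) \<circ> rot m k)"
      using that unfolding cjg_def by (metis comp_assoc)
    thus ?thesis using rot_inv1[OF m, of k] by simp
  qed
  have c1: "s (rot m k j) = rot m k (s j)" for j using comm[OF fs] by (metis comp_apply)
  have c2: "s' (rot m k j) = rot m k (s' j)" for j using comm[OF fs'] by (metis comp_apply)
  have "i \<in> {1..m} \<longrightarrow> s i = s' i" for i
  proof (induction i rule: less_induct)
    case (less i)
    show ?case
    proof
      assume i: "i \<in> {1..m}"
      show "s i = s' i"
      proof (cases "i \<le> k")
        case True thus ?thesis using agree i by auto
      next
        case False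
        define j where "j = i - k"
        have j: "j \<in> {1..m}" "j < i" using False i k1 unfolding j_def by auto
        have "rot m k j = i"
        proof -
          obtain j' where j': "j = Suc j'" using j by (cases j) auto
          have "j' + k = i - 1" using j' False unfolding j_def by auto
          hence "(j' + k) mod m = i - 1" using i by auto
          thus ?thesis using j' j i by (simp add: rot_Suc)
        qed
        hence "s i = rot m k (s j)" "s' i = rot m k (s' j)" using c1 c2 by metis+
        thus ?thesis using less.IH[OF j(2)] j(1) by simp
      qed
    qed
  qed
  moreover have "s i = s' i" if "i \<notin> {1..m}" for i
    using that permutes_not_in[OF mcycle_perm[OF s]] permutes_not_in[OF mcycle_perm[OF s']] by simp
  ultimately show ?thesis by blast
qed

lemma card_fix: assumes m: "1 \<le> m" and k1: "1 \<le> k" and k: "k \<le> m"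
  shows "card {s. is_mcycle m s \<and> cjg m k s = s} \<le> m ^ k"
proof -
  let ?S = "{s. is_mcycle m s \<and> cjg m k s = s}"
  let ?P = "PiE {1..k} (\<lambda>_. {1..m})"
  have "card ?S \<le> card ?P"
  proof (rule card_inj_on_le[where f = "\<lambda>s. restrict s {1..k}"])
    show "inj_on (\<lambda>s. restrict s {1..k}) ?S"
    proof (rule inj_onI)
      fix s s' assume "s \<in> ?S" "s' \<in> ?S" "restrict s {1..k} = restrict s' {1..k}"
      moreover hence "\<forall>i\<in>{1..k}. s i = s' i" by (metis restrict_apply')
      ultimately show "s = s'" using fix_inj[OF m k1] by blast
    qed
    show "(\<lambda>s. restrict s {1..k}) ` ?S \<subseteq> ?P"
    proof
      fix x assume "x \<in> (\<lambda>s. restrict s {1..k}) ` ?S"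
      then obtain s where s: "is_mcycle m s" "x = restrict s {1..k}" by auto
      have "s i \<in> {1..m}" if "i \<in> {1..k}" for i
        using permutes_in_image[OF mcycle_perm[OF s(1)]] that k by auto
      thus "x \<in> ?P" using s(2) by auto
    qed
    show "finite ?P" by (rule finite_PiE) auto
  qed
  also have "card ?P = m ^ k" by (simp add: card_PiE)
  finally show ?thesis .
qed

lemma per_fix: assumes m: "1 \<le> m" and ij: "i < j" "j < m" and eq: "cjg m i r = cjg m j r"
  shows "cjg m (j - i) r = r"
proof -
  have "cjg m (m - i) (cjg m i r) = r" using cjg_add[OF m] cjg_m[OF m] ij by simp
  moreover have "cjg m (m - i) (cjg m j r) = cjg m (j - i) r"
  proof -
    have "cjg m (m - i) (cjg m j r) = cjg m (m - i + j) r" using cjg_add[OF m] by simp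
    also have "m - i + j = (j - i) + m" using ij by auto
    also have "cjg m ((j - i) + m) r = cjg m (j - i) r"
      using cjg_mod[OF m, of "(j - i) + m" r] cjg_mod[OF m, of "j - i" r] by simp
    finally show ?thesis .
  qed
  ultimately show ?thesis using eq by simp
qed

lemma half_fix: assumes m: "1 \<le> m" and d: "1 \<le> d" "d < m" and fx: "cjg m d r = r"
  shows "\<exists>k\<in>{1..m div 2}. cjg m k r = r"
proof (cases "d \<le> m div 2")
  case True thus ?thesis using d fx by auto
next
  case False
  have "cjg m (m - d) r = cjg m (m - d) (cjg m d r)" using fx by simp
  also have "\<dots> = r" using cjg_add[OF m] cjg_m[OF m] d by simp
  finally show ?thesis using False d by (intro bexI[of _ "m - d"]) auto
qed

lemma Rn_sub: assumes m: "1 \<le> m" and r: "r \<in> Rset m" and c: "card (orb m r) \<noteq> m"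
  shows "r \<in> (\<Union>k\<in>{1..m div 2}. {s. is_mcycle m s \<and> cjg m k s = s})"
proof -
  have "\<not> inj_on (\<lambda>k. cjg m k r) {..<m}"
  proof
    assume "inj_on (\<lambda>k. cjg m k r) {..<m}"
    hence "card (orb m r) = m" unfolding orb_def using card_image by fastforce
    thus False using c by simp
  qed
  then obtain i j where ij: "i < m" "j < m" "i \<noteq> j" "cjg m i r = cjg m j r"
    unfolding inj_on_def by auto
  have "\<exists>d. 1 \<le> d \<and> d < m \<and> cjg m d r = r"
  proof (cases "i < j")
    case True thus ?thesis using per_fix[OF m True ij(2) ij(4)] ij by (intro exI[of _ "j - i"]) auto
  next
    case False
    hence "j < i" using ij by auto
    thus ?thesis using per_fix[OF m _ ij(1), of j r] ij by (intro exI[of _ "i - j"]) auto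
  qed
  then obtain d where "1 \<le> d" "d < m" "cjg m d r = r" by blast
  from half_fix[OF m this] obtain k where "k \<in> {1..m div 2}" "cjg m k r = r" by blast
  moreover have "is_mcycle m r" using R_X[OF m] r by auto
  ultimately show ?thesis by blast
qed

lemma R_upper: assumes m: "1 \<le> m"
  shows "m * card (Rset m) \<le> card {p. is_mcycle m p} + m * ((m div 2) * m ^ (m div 2))"
proof -
  let ?X = "{p. is_mcycle m p}"
  define Rf where "Rf = {r \<in> Rset m. card (orb m r) = m}"
  define Rn where "Rn = Rset m - Rf"
  have fR: "finite (Rset m)" using finite_subset[OF R_X[OF m] finite_X] .
  have fRf: "finite Rf" "finite Rn" using fR unfolding Rf_def Rn_def by auto
  have cR: "card (Rset m) = card Rf + card Rn"
    unfolding Rn_def using card_Diff_subset[of Rf "Rset m"] fRf card_mono[of "Rset m" Rf] fR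
    unfolding Rf_def by auto
  have "m * card Rf = (\<Sum>r\<in>Rf. card (orb m r))" unfolding Rf_def by simp
  also have "\<dots> = card (\<Union>r\<in>Rf. orb m r)"
    by (rule card_UN_disjoint[symmetric]) (use fRf R_disj[OF m] in \<open>auto simp: orb_def Rf_def\<close>)
  also have "\<dots> \<le> card ?X"
    by (rule card_mono[OF finite_X]) (use orb_X[OF m] R_X[OF m] in \<open>auto simp: Rf_def\<close>)
  finally have a: "m * card Rf \<le> card ?X" .
  have "Rn \<subseteq> (\<Union>k\<in>{1..m div 2}. {s. is_mcycle m s \<and> cjg m k s = s})"
    using Rn_sub[OF m] unfolding Rn_def Rf_def by blast
  hence "card Rn \<le> card (\<Union>k\<in>{1..m div 2}. {s. is_mcycle m s \<and> cjg m k s = s})"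
    by (rule card_mono[rotated]) (auto intro: finite_subset[OF _ finite_X])
  also have "\<dots> \<le> (\<Sum>k\<in>{1..m div 2}. card {s. is_mcycle m s \<and> cjg m k s = s})"
    by (rule card_UN_le) simp
  also have "\<dots> \<le> (\<Sum>k\<in>{1..m div 2}. m ^ (m div 2))"
  proof (rule sum_mono)
    fix k assume k: "k \<in> {1..m div 2}"
    have "card {s. is_mcycle m s \<and> cjg m k s = s} \<le> m ^ k" by (rule card_fix[OF m]) (use k in auto)
    also have "\<dots> \<le> m ^ (m div 2)" by (rule power_increasing) (use k m in auto)
    finally show "card {s. is_mcycle m s \<and> cjg m k s = s} \<le> m ^ (m div 2)" .
  qed
  also have "\<dots> = (m div 2) * m ^ (m div 2)" by simp
  finally have b: "card Rn \<le> (m div 2) * m ^ (m div 2)" .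
  have "m * card (Rset m) = m * card Rf + m * card Rn" using cR by (simp add: algebra_simps)
  also have "\<dots> \<le> card ?X + m * ((m div 2) * m ^ (m div 2))" using a b by (intro add_mono mult_le_mono2) auto
  finally show ?thesis .
qed



lemma lim0: "((\<lambda>x::real. x powr (x/2+3) * exp x / x powr x) \<longlongrightarrow> 0) at_top"
  by real_asymp

lemma fact_lb: "real n ^ n / exp (real n) \<le> fact n"
proof -
  have "real n ^ n / fact n \<le> exp (real n)"
  proof -
    have "(\<Sum>i\<in>{n}. real n ^ i /\<^sub>R fact i) \<le> (\<Sum>i. real n ^ i /\<^sub>R fact i)"
      by (rule sum_le_suminf) (auto intro: summable_exp)
    thus ?thesis by (simp add: exp_def divide_inverse mult.commute)
  qed
  thus ?thesis by (simp add: field_simps)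
qed

lemma ebound: assumes m: "1 \<le> m"
  shows "real m * (real (m div 2) * real m ^ (m div 2)) / fact (m - 1)
     \<le> real m powr (real m/2+3) * exp (real m) / real m powr real m"
proof -
  have fm: "fact m = real m * fact (m - 1)" using m by (cases m) auto
  have fpos: "(0::real) < fact (m - 1)" by simp
  have mpos: "(0::real) < real m" using m by simp
  have "real m * (real (m div 2) * real m ^ (m div 2)) / fact (m - 1)
      = real m * real m * (real (m div 2) * real m ^ (m div 2)) / fact m"
    using fm mpos by (simp add: field_simps)
  also have "\<dots> \<le> real m * real m * (real m * real m ^ (m div 2)) / fact m"
    by (intro divide_right_mono mult_left_mono mult_right_mono) auto
  also have "real m * real m * (real m * real m ^ (m div 2)) = real m ^ (m div 2 + 3)"
    by (simp add: power_add power3_eq_cube)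
  also have "real m ^ (m div 2 + 3) = real m powr real (m div 2 + 3)"
    using powr_realpow[OF mpos, of "m div 2 + 3"] by (simp only:)
  also have "\<dots> \<le> real m powr (real m / 2 + 3)"
  proof (rule powr_mono)
    have "real (m div 2) \<le> real m / 2" by linarith
    thus "real (m div 2 + 3) \<le> real m / 2 + 3" by simp
  qed (use m in auto)
  also have "real m powr (real m / 2 + 3) / fact m \<le> real m powr (real m / 2 + 3) / (real m ^ m / exp (real m))"
    by (rule divide_left_mono[OF fact_lb]) (use mpos in auto)
  also have "real m ^ m = real m powr real m" using mpos by (simp add: powr_realpow)
  finally show ?thesis by (simp add: field_simps)
qed


lemma main_facts: assumes m: "1 \<le> m"
  shows "fact (m - 1) / real m \<le> real (dimH m)"
    and "real (dimH m) / (fact (m - 1) / real m)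
         \<le> 1 + real m * (real (m div 2) * real m ^ (m div 2)) / fact (m - 1)"
    and "1 \<le> real (dimH m) / (fact (m - 1) / real m)"
proof -
  have X: "real (card {p. is_mcycle m p}) = fact (m - 1)" using card_X[OF m] by (simp add: of_nat_fact)
  have H: "real (dimH m) = real (card (Rset m))" using dimH_R[OF m] by simp
  have mpos: "(0::real) < real m" using m by simp
  have fpos: "(0::real) < fact (m - 1)" by simp
  have lo: "fact (m - 1) \<le> real m * real (dimH m)"
    using R_lower[OF m] X H by (metis of_nat_le_iff of_nat_mult)
  have up: "real m * real (dimH m) \<le> fact (m - 1) + real m * (real (m div 2) * real m ^ (m div 2))"
  proof -
    have "real (m * card (Rset m)) \<le> real (card {p. is_mcycle m p} + m * ((m div 2) * m ^ (m div 2)))"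
      using R_upper[OF m] by (simp only: of_nat_le_iff)
    thus ?thesis using X H by simp
  qed
  show "fact (m - 1) / real m \<le> real (dimH m)" using lo mpos by (simp add: field_simps)
  show "1 \<le> real (dimH m) / (fact (m - 1) / real m)" using lo mpos fpos by (simp add: field_simps)
  show "real (dimH m) / (fact (m - 1) / real m)
         \<le> 1 + real m * (real (m div 2) * real m ^ (m div 2)) / fact (m - 1)"
    using up mpos fpos by (simp add: field_simps)
qed

theorem theorem17:
  shows "(\<forall>m::nat. 1 \<le> m \<longrightarrow> real (dimH m) \<ge> fact (m - 1) / real m)
         \<and> (\<lambda>m. real (dimH m)) \<sim>[at_top] (\<lambda>m. fact (m - 1) / real m)"
proof
  show "\<forall>m::nat. 1 \<le> m \<longrightarrow> real (dimH m) \<ge> fact (m - 1) / real m"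
    using main_facts(1) by blast
  let ?e = "\<lambda>m::nat. real m * (real (m div 2) * real m ^ (m div 2)) / fact (m - 1)"
  let ?g = "\<lambda>x::real. x powr (x/2+3) * exp x / x powr x"
  have glim: "((\<lambda>m::nat. ?g (real m)) \<longlongrightarrow> 0) at_top"
    using filterlim_compose[OF lim0 filterlim_real_sequentially] by simp
  have elim: "(?e \<longlongrightarrow> 0) at_top"
  proof (rule tendsto_sandwich[OF _ _ tendsto_const glim])
    show "eventually (\<lambda>m. 0 \<le> ?e m) at_top" by simp
    show "eventually (\<lambda>m. ?e m \<le> ?g (real m)) at_top"
      using eventually_ge_at_top[of "1::nat"] by eventually_elim (rule ebound)
  qed
  have "((\<lambda>m. real (dimH m) / (fact (m - 1) / real m)) \<longlongrightarrow> 1) at_top"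
  proof (rule tendsto_sandwich[OF _ _ tendsto_const])
    show "eventually (\<lambda>m. 1 \<le> real (dimH m) / (fact (m - 1) / real m)) at_top"
      using eventually_ge_at_top[of "1::nat"] by eventually_elim (rule main_facts(3))
    show "eventually (\<lambda>m. real (dimH m) / (fact (m - 1) / real m) \<le> 1 + ?e m) at_top"
      using eventually_ge_at_top[of "1::nat"] by eventually_elim (rule main_facts(2))
    show "((\<lambda>m. 1 + ?e m) \<longlongrightarrow> 1) at_top" using tendsto_add[OF tendsto_const elim, of 1] by simp
  qed
  thus "(\<lambda>m. real (dimH m)) \<sim>[at_top] (\<lambda>m. fact (m - 1) / real m)"
    by (rule asymp_equivI')
qed

end
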